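(* For every $n\in\mathbb{N}$ and every admissible $\Theta$: if $p$ is a projector over $A(\mathbb{R}^{2n}_\Theta)$, then all entries of $p$ are scalar multiples of the identity (i.e. $p$ is a projector over $\mathbb{C}$), and hence $K_0(A(\mathbb{R}^{2n}_\Theta))=K_0(\mathbb{C})\cong\mathbb{Z}$.
   Context: Let $\Theta=(\theta_{pq})_{1\leq p,q\leq 2n}$ be a real skew-symmetric matrix with $\theta_{2m-1,2m}=-\theta_{2m,2m-1}>0$ for $m=1,\dots,n$ and all other entries $0$. $A(\mathbb{R}^{2n}_\Theta)$ is the unital $*$-algebra generated by self-adjoint $x_1,\dots,x_{2n}$ with $[x_p,x_q]=-i\theta_{pq}$; every element is a finite sum $\sum a_{p_1,\dots,p_{2n}}x_1^{p_1}\cdots x_{2n}^{p_{2n}}$ with linearly independent ordered monomials. A projector over a $*$-algebra $A$ is a square matrix $p$ over $A$ with $p^2=p=p^*$; projectors $p,q$ are equivalent if $\mathrm{diag}(p,0)=u\,\mathrm{diag}(q,0)\,u^*$ for some unitary matrix $u$ over $A$; $K_0(A)$ is the Grothendieck group of equivalence classes under $p+q:=\mathrm{diag}(p,q)$. *)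

theory Defs
  imports Complex_Main "HOL-Library.Function_Algebras"
begin

text \<open>Elements of A(R^{2n}_Theta): coefficient functions on multi-indices
  (alpha i = exponent of the generator x_{i+1}, 0-based), finitely supported,
  and only involving the generators x_1..x_{2n}. The function represents
  sum alpha. f alpha * x_1^{alpha 0} ... x_{2n}^{alpha (2n-1)} (ordered monomials).
  The admissible Theta is encoded by theta m = theta_{2m+1,2m+2} > 0 (m < n).\<close>

type_synonym elem = "(nat \<Rightarrow> nat) \<Rightarrow> complex"
type_synonym mat = "nat \<times> (nat \<Rightarrow> nat \<Rightarrow> elem)"

definition Aelem :: "nat \<Rightarrow> elem \<Rightarrow> bool" where
  "Aelem n f \<longleftrightarrow> finite {\<alpha>. f \<alpha> \<noteq> 0} \<and> (\<forall>\<alpha>. f \<alpha> \<noteq> 0 \<longrightarrow> (\<forall>i\<ge>2*n. \<alpha> i = 0))"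

text \<open>Coefficient of the ordered monomial x^gamma in the product x^alpha x^beta,
  using [x_{2m+1}, x_{2m+2}] = -i theta_m (1-based), i.e.
  y^b x^c = sum_k k! (b choose k)(c choose k) (i theta)^k x^(c-k) y^(b-k),
  generators from different pairs commuting.\<close>
definition ncoeff :: "(nat \<Rightarrow> real) \<Rightarrow> nat \<Rightarrow> (nat \<Rightarrow> nat) \<Rightarrow> (nat \<Rightarrow> nat) \<Rightarrow> (nat \<Rightarrow> nat) \<Rightarrow> complex" where
  "ncoeff \<theta> n \<alpha> \<beta> \<gamma> =
    (if (\<forall>i\<ge>2*n. \<gamma> i = 0) \<and>
        (\<forall>m<n. \<gamma> (2*m) \<le> \<alpha> (2*m) + \<beta> (2*m) \<and>
               \<gamma> (2*m+1) + (\<alpha> (2*m) + \<beta> (2*m) - \<gamma> (2*m)) = \<alpha> (2*m+1) + \<beta> (2*m+1) \<and>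
               \<alpha> (2*m) + \<beta> (2*m) - \<gamma> (2*m) \<le> \<alpha> (2*m+1) \<and>
               \<alpha> (2*m) + \<beta> (2*m) - \<gamma> (2*m) \<le> \<beta> (2*m))
     then (\<Prod>m<n. let k = \<alpha> (2*m) + \<beta> (2*m) - \<gamma> (2*m) in
             of_nat (fact k * (\<alpha> (2*m+1) choose k) * (\<beta> (2*m) choose k))
             * (\<i> * complex_of_real (\<theta> m)) ^ k)
     else 0)"

definition amult :: "(nat \<Rightarrow> real) \<Rightarrow> nat \<Rightarrow> elem \<Rightarrow> elem \<Rightarrow> elem" where
  "amult \<theta> n f g = (\<lambda>\<gamma>. \<Sum>\<alpha>\<in>{\<alpha>. f \<alpha> \<noteq> 0}. \<Sum>\<beta>\<in>{\<beta>. g \<beta> \<noteq> 0}.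
                        f \<alpha> * g \<beta> * ncoeff \<theta> n \<alpha> \<beta> \<gamma>)"

definition mono :: "(nat \<Rightarrow> nat) \<Rightarrow> elem" where
  "mono \<alpha> = (\<lambda>\<gamma>. if \<gamma> = \<alpha> then 1 else 0)"

definition ascal :: "complex \<Rightarrow> elem" where
  "ascal c = (\<lambda>\<gamma>. if \<gamma> = (\<lambda>_. 0) then c else 0)"

abbreviation aone :: elem where "aone \<equiv> ascal 1"

text \<open>Involution: antilinear, with (x^alpha)^* = reversed product
  = (product of the x_{2m+2} powers) * (product of the x_{2m+1} powers).\<close>
definition astar :: "(nat \<Rightarrow> real) \<Rightarrow> nat \<Rightarrow> elem \<Rightarrow> elem" where
  "astar \<theta> n f = (\<Sum>\<alpha>\<in>{\<alpha>. f \<alpha> \<noteq> 0}. (\<lambda>\<gamma>. cnj (f \<alpha>) *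
      amult \<theta> n (mono (\<lambda>i. if odd i then \<alpha> i else 0))
                 (mono (\<lambda>i. if even i then \<alpha> i else 0)) \<gamma>))"

text \<open>Square matrices over A: (size k, entries); only entries i,j < k matter.\<close>
definition is_mat :: "nat \<Rightarrow> mat \<Rightarrow> bool" where
  "is_mat n P \<longleftrightarrow> (\<forall>i<fst P. \<forall>j<fst P. Aelem n (snd P i j))"

definition mmult :: "(nat \<Rightarrow> real) \<Rightarrow> nat \<Rightarrow> nat \<Rightarrow> (nat \<Rightarrow> nat \<Rightarrow> elem) \<Rightarrow> (nat \<Rightarrow> nat \<Rightarrow> elem) \<Rightarrow> (nat \<Rightarrow> nat \<Rightarrow> elem)" where
  "mmult \<theta> n k M N = (\<lambda>i j. \<Sum>l<k. amult \<theta> n (M i l) (N l j))"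

definition madj :: "(nat \<Rightarrow> real) \<Rightarrow> nat \<Rightarrow> (nat \<Rightarrow> nat \<Rightarrow> elem) \<Rightarrow> (nat \<Rightarrow> nat \<Rightarrow> elem)" where
  "madj \<theta> n M = (\<lambda>i j. astar \<theta> n (M j i))"

definition projector :: "(nat \<Rightarrow> real) \<Rightarrow> nat \<Rightarrow> mat \<Rightarrow> bool" where
  "projector \<theta> n P \<longleftrightarrow> is_mat n P \<and>
     (\<forall>i<fst P. \<forall>j<fst P. mmult \<theta> n (fst P) (snd P) (snd P) i j = snd P i j
                         \<and> madj \<theta> n (snd P) i j = snd P i j)"

definition unitary :: "(nat \<Rightarrow> real) \<Rightarrow> nat \<Rightarrow> nat \<Rightarrow> (nat \<Rightarrow> nat \<Rightarrow> elem) \<Rightarrow> bool" where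
  "unitary \<theta> n k U \<longleftrightarrow> is_mat n (k, U) \<and>
     (\<forall>i<k. \<forall>j<k. mmult \<theta> n k U (madj \<theta> n U) i j = (if i = j then aone else 0)
                  \<and> mmult \<theta> n k (madj \<theta> n U) U i j = (if i = j then aone else 0))"

definition dsum :: "mat \<Rightarrow> mat \<Rightarrow> mat" where
  "dsum P Q = (fst P + fst Q, \<lambda>i j. if i < fst P \<and> j < fst P then snd P i j
                   else if fst P \<le> i \<and> fst P \<le> j then snd Q (i - fst P) (j - fst P) else 0)"

definition zmat :: "nat \<Rightarrow> mat" where
  "zmat m = (m, \<lambda>i j. 0)"

definition proj_equiv :: "(nat \<Rightarrow> real) \<Rightarrow> nat \<Rightarrow> mat \<Rightarrow> mat \<Rightarrow> bool" where
  "proj_equiv \<theta> n P Q \<longleftrightarrow> (\<exists>m m' U.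
     fst P + m = fst Q + m' \<and> unitary \<theta> n (fst P + m) U \<and>
     (\<forall>i<fst P + m. \<forall>j<fst P + m. snd (dsum P (zmat m)) i j =
        mmult \<theta> n (fst P + m) (mmult \<theta> n (fst P + m) U (snd (dsum Q (zmat m')))) (madj \<theta> n U) i j))"

text \<open>Equality in the Grothendieck group K_0: [P]-[Q] = [P']-[Q'] iff
  P + Q' + R ~ P' + Q + R for some projector R.\<close>
definition K0_eq :: "(nat \<Rightarrow> real) \<Rightarrow> nat \<Rightarrow> mat \<Rightarrow> mat \<Rightarrow> mat \<Rightarrow> mat \<Rightarrow> bool" where
  "K0_eq \<theta> n P Q P' Q' \<longleftrightarrow> (\<exists>R. projector \<theta> n R \<and>
     proj_equiv \<theta> n (dsum (dsum P Q') R) (dsum (dsum P' Q) R))"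

end

theory Submission
  imports Defs
begin


lemma sum_app: "(\<Sum>a\<in>A. f a) x = (\<Sum>a\<in>A. f a x)"
  by (induction A rule: infinite_finite_induct) auto

definition nice :: "nat \<Rightarrow> (nat \<Rightarrow> nat) \<Rightarrow> bool" where
  "nice n \<alpha> \<longleftrightarrow> (\<forall>i\<ge>2*n. \<alpha> i = 0)"

definition lexless :: "(nat \<Rightarrow> nat) \<Rightarrow> (nat \<Rightarrow> nat) \<Rightarrow> bool" where
  "lexless \<alpha> \<beta> \<longleftrightarrow> (\<exists>j. \<alpha> j < \<beta> j \<and> (\<forall>i>j. \<alpha> i = \<beta> i))"

lemma lex_irrefl: "\<not> lexless a a" by (auto simp: lexless_def)

lemma lex_trans: assumes "lexless a b" "lexless b c" shows "lexless a c"
proof -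
  obtain j1 where j1: "a j1 < b j1" "\<forall>i>j1. a i = b i" using assms(1) lexless_def by blast
  obtain j2 where j2: "b j2 < c j2" "\<forall>i>j2. b i = c i" using assms(2) lexless_def by blast
  show ?thesis unfolding lexless_def
  proof (cases "j1 < j2")
    case True then show "\<exists>j. a j < c j \<and> (\<forall>i>j. a i = c i)"
      using j1 j2 by (intro exI[of _ j2]) auto
  next
    case False
    then show "\<exists>j. a j < c j \<and> (\<forall>i>j. a i = c i)"
      using j1 j2 by (intro exI[of _ j1]) (metis le_neq_implies_less not_less order.strict_trans order_less_trans)
  qed
qed

lemma lex_pointwise:
  assumes "nice n b" "\<forall>i. a i \<le> b i" "a \<noteq> b" shows "lexless a b"
proof -
  let ?D = "{i. a i \<noteq> b i}"
  have sub: "?D \<subseteq> {..<2*n}"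
  proof
    fix i assume i: "i \<in> ?D"
    show "i \<in> {..<2*n}"
    proof (rule ccontr)
      assume "i \<notin> {..<2*n}"
      then have "b i = 0" using assms(1) unfolding nice_def by auto
      then have "a i = 0" using assms(2) by (metis le_zero_eq)
      then show False using i \<open>b i = 0\<close> by auto
    qed
  qed
  hence fin: "finite ?D" by (rule finite_subset) auto
  have ne: "?D \<noteq> {}" using assms(3) by auto
  define j where "j = Max ?D"
  have "j \<in> ?D" using fin ne j_def Max_in by blast
  moreover have "\<forall>i>j. a i = b i" using Max_ge[OF fin] j_def by (metis (mono_tags) mem_Collect_eq not_le)
  ultimately show ?thesis unfolding lexless_def using assms(2)[rule_format, of j]
    by (intro exI[of _ j]) auto
qed

lemma lex_total:
  assumes "nice n a" "nice n b" "a \<noteq> b" shows "lexless a b \<or> lexless b a"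
proof -
  let ?D = "{i. a i \<noteq> b i}"
  have sub: "?D \<subseteq> {..<2*n}"
  proof
    fix i assume i: "i \<in> ?D"
    show "i \<in> {..<2*n}"
    proof (rule ccontr)
      assume "i \<notin> {..<2*n}"
      then have "b i = 0" "a i = 0" using assms(1,2) unfolding nice_def by auto
      then show False using i by auto
    qed
  qed
  hence fin: "finite ?D" by (rule finite_subset) auto
  have ne: "?D \<noteq> {}" using assms(3) by auto
  define j where "j = Max ?D"
  have "j \<in> ?D" using fin ne j_def Max_in by blast
  moreover have "\<forall>i>j. a i = b i" using Max_ge[OF fin] j_def by (metis (mono_tags) mem_Collect_eq not_le)
  ultimately show ?thesis unfolding lexless_def
    by (cases "a j < b j") (auto intro!: exI[of _ j] simp: not_less order_le_less)
qed

lemma lex_add: "lexless a b \<Longrightarrow> lexless (\<lambda>i. a i + c i) (\<lambda>i. b i + c i)"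
  unfolding lexless_def by auto

lemma lex_max:
  assumes "finite S" "S \<noteq> {}" "\<forall>a\<in>S. nice n a"
  shows "\<exists>m\<in>S. \<forall>a\<in>S. a = m \<or> lexless a m"
  using assms
proof (induction S rule: finite_ne_induct)
  case (singleton x) then show ?case by auto
next
  case (insert x F)
  then obtain m where m: "m \<in> F" "\<forall>a\<in>F. a = m \<or> lexless a m" by auto
  show ?case
  proof (cases "lexless m x")
    case True then show ?thesis using m lex_trans by (intro bexI[of _ x]) auto
  next
    case False
    then have "x = m \<or> lexless x m" using lex_total[of n x m] insert.prems m(1) by auto
    then show ?thesis using m by (intro bexI[of _ m]) auto
  qed
qed

lemma if_nz: "(if P then x else 0) \<noteq> (0::'a::zero) \<Longrightarrow> P" by (cases P) auto

lemma ncoeff_nz: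
  assumes "ncoeff \<theta> n a b g \<noteq> 0"
  shows "(\<forall>i. g i \<le> a i + b i) \<and> nice n g"
proof -
  have C: "(\<forall>i\<ge>2*n. g i = 0) \<and>
        (\<forall>m<n. g (2*m) \<le> a (2*m) + b (2*m) \<and>
               g (2*m+1) + (a (2*m) + b (2*m) - g (2*m)) = a (2*m+1) + b (2*m+1))"
    using if_nz[OF assms[unfolded ncoeff_def]] by blast
  have "g i \<le> a i + b i" for i
  proof (cases "i \<ge> 2*n")
    case True then show ?thesis using C by auto
  next
    case False
    define m where "m = i div 2"
    have m: "m < n" using False m_def by auto
    show ?thesis
    proof (cases "even i")
      case True then have "i = 2*m" using m_def by auto
      then show ?thesis using C m by auto
    next
      case False then have "i = 2*m+1" using m_def by presburger
      moreover have eq: "g (2*m+1) + (a (2*m) + b (2*m) - g (2*m)) = a (2*m+1) + b (2*m+1)"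
        using C m by blast
      have "g (2*m+1) \<le> a (2*m+1) + b (2*m+1)" unfolding eq[symmetric] by (rule le_add1)
      ultimately show ?thesis by simp
    qed
  qed
  then show ?thesis using C unfolding nice_def by auto
qed

lemma ncoeff_top:
  assumes "nice n a" "nice n b"
  shows "ncoeff \<theta> n a b (\<lambda>i. a i + b i) = 1"
proof -
  have "(\<lambda>m. let k = a (2*m) + b (2*m) - (a (2*m) + b (2*m)) in
             of_nat (fact k * (a (2*m+1) choose k) * (b (2*m) choose k))
             * (\<i> * complex_of_real (\<theta> m)) ^ k) = (\<lambda>m. 1)"
    by (simp add: Let_def)
  moreover have "(\<forall>i\<ge>2*n. a i + b i = 0)" using assms unfolding nice_def by simp
  ultimately show ?thesis unfolding ncoeff_def by simp
qed


lemma supp_mono: "{x. mono a x \<noteq> 0} = {a}"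
  by (auto simp: mono_def)

lemma amult_mono: "amult \<theta> n (mono a) (mono b) g = ncoeff \<theta> n a b g"
  unfolding amult_def supp_mono by (simp add: mono_def)

definition oddp :: "(nat \<Rightarrow> nat) \<Rightarrow> nat \<Rightarrow> nat" where
  "oddp a = (\<lambda>i. if odd i then a i else 0)"
definition evp :: "(nat \<Rightarrow> nat) \<Rightarrow> nat \<Rightarrow> nat" where
  "evp a = (\<lambda>i. if even i then a i else 0)"

lemma astar_apply:
  "astar \<theta> n f g = (\<Sum>a\<in>{a. f a \<noteq> 0}. cnj (f a) * ncoeff \<theta> n (oddp a) (evp a) g)"
  unfolding astar_def sum_app amult_mono oddp_def evp_def by simp

lemma oddp_evp: "(\<lambda>i. oddp a i + evp a i) = a"
  unfolding oddp_def evp_def by auto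

lemma nice_oddp: "nice n a \<Longrightarrow> nice n (oddp a)" and nice_evp: "nice n a \<Longrightarrow> nice n (evp a)"
  unfolding nice_def oddp_def evp_def by auto


lemma astar_nz:
  assumes "astar \<theta> n f g \<noteq> 0"
  shows "\<exists>a. f a \<noteq> 0 \<and> (\<forall>i. g i \<le> a i) \<and> nice n g"
proof -
  from assms obtain a where a: "f a \<noteq> 0" "cnj (f a) * ncoeff \<theta> n (oddp a) (evp a) g \<noteq> 0"
    using sum.not_neutral_contains_not_neutral[OF assms[unfolded astar_apply]] by blast
  then have "ncoeff \<theta> n (oddp a) (evp a) g \<noteq> 0" by auto
  from ncoeff_nz[OF this] have "(\<forall>i. g i \<le> a i) \<and> nice n g"
    by (metis oddp_evp)
  with a show ?thesis by blast
qed

lemma Aelem_nice: "Aelem n f \<Longrightarrow> f a \<noteq> 0 \<Longrightarrow> nice n a"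
  unfolding Aelem_def nice_def by auto

lemma finite_below:
  assumes "nice n a"
  shows "finite {g. (\<forall>i. g i \<le> a i) \<and> nice n g}"
proof -
  let ?M = "\<Sum>i<2*n. a i"
  have "{g. (\<forall>i. g i \<le> a i) \<and> nice n g} \<subseteq>
      {g. \<forall>x. (x \<in> {..<2*n} \<longrightarrow> g x \<in> {..?M}) \<and> (x \<notin> {..<2*n} \<longrightarrow> g x = 0)}"
  proof (clarsimp, intro conjI allI impI)
    fix g x assume g: "\<forall>i. g i \<le> a i" "nice n g" and x: "x < 2*n"
    have "a x \<le> ?M" using x by (intro member_le_sum) auto
    then show "g x \<le> ?M" using g(1) le_trans by blast
  next
    fix g x assume "nice n g" "\<not> x < 2*n" then show "g x = 0" unfolding nice_def by auto
  qed
  then show ?thesis by (rule finite_subset) (intro finite_set_of_finite_funs; simp)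
qed


lemma Aelem_astar:
  assumes "Aelem n f" shows "Aelem n (astar \<theta> n f)"
proof -
  have fin: "finite {a. f a \<noteq> 0}" using assms Aelem_def by auto
  have "{g. astar \<theta> n f g \<noteq> 0} \<subseteq> (\<Union>a\<in>{a. f a \<noteq> 0}. {g. (\<forall>i. g i \<le> a i) \<and> nice n g})"
  proof
    fix g assume "g \<in> {g. astar \<theta> n f g \<noteq> 0}"
    then obtain a where "f a \<noteq> 0" "(\<forall>i. g i \<le> a i) \<and> nice n g" using astar_nz[of \<theta> n f g] by auto
    then show "g \<in> (\<Union>a\<in>{a. f a \<noteq> 0}. {g. (\<forall>i. g i \<le> a i) \<and> nice n g})" by blast
  qed
  moreover have "finite (\<Union>a\<in>{a. f a \<noteq> 0}. {g. (\<forall>i. g i \<le> a i) \<and> nice n g})"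
  proof (rule finite_UN_I[OF fin])
    fix a assume "a \<in> {a. f a \<noteq> 0}"
    then have "nice n a" using Aelem_nice[OF assms] by auto
    then show "finite {g. (\<forall>i. g i \<le> a i) \<and> nice n g}" by (rule finite_below)
  qed
  ultimately have "finite {g. astar \<theta> n f g \<noteq> 0}" by (rule finite_subset)
  moreover have "\<forall>g. astar \<theta> n f g \<noteq> 0 \<longrightarrow> (\<forall>i\<ge>2*n. g i = 0)"
  proof (intro allI impI)
    fix g i assume "astar \<theta> n f g \<noteq> 0" "2*n \<le> i"
    then show "g i = 0" using astar_nz[of \<theta> n f g] unfolding nice_def by auto
  qed
  ultimately show ?thesis unfolding Aelem_def by blast
qed

lemma lex_sum_top:
  assumes "nice n a" "nice n b" "a = m \<or> lexless a m" "b = m \<or> lexless b m"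
    "\<forall>i. m i + m i \<le> a i + b i"
  shows "a = m \<and> b = m"
proof (rule ccontr)
  assume ne: "\<not> (a = m \<and> b = m)"
  have comm: "(\<lambda>i. m i + b i) = (\<lambda>i. b i + m i)" by (auto simp: add.commute)
  have L: "lexless (\<lambda>i. a i + b i) (\<lambda>i. m i + m i)"
  proof (cases "a = m")
    case True
    then have "lexless b m" using ne assms(4) by auto
    from lex_add[OF this, of m] show ?thesis using True comm by simp
  next
    case False
    then have la: "lexless a m" using assms(3) by auto
    from lex_add[OF la, of b] have 1: "lexless (\<lambda>i. a i + b i) (\<lambda>i. m i + b i)" .
    show ?thesis
    proof (cases "b = m")
      case True then show ?thesis using 1 by simp
    next
      case False
      then have "lexless b m" using assms(4) by auto
      from lex_add[OF this, of m] have "lexless (\<lambda>i. m i + b i) (\<lambda>i. m i + m i)" using comm by simp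
      then show ?thesis using 1 lex_trans by blast
    qed
  qed
  have nab: "nice n (\<lambda>i. a i + b i)" using assms(1,2) unfolding nice_def by auto
  show False
  proof (cases "(\<lambda>i. m i + m i) = (\<lambda>i. a i + b i)")
    case True then show False using L lex_irrefl by simp
  next
    case False
    from lex_pointwise[OF nab assms(5) False] L show False using lex_trans lex_irrefl by blast
  qed
qed

lemma amult_astar_top:
  assumes f: "Aelem n f" and fs: "Aelem n (astar \<theta> n f)" and mu: "nice n m"
    and below: "\<forall>a. f a \<noteq> 0 \<longrightarrow> a = m \<or> lexless a m"
  shows "amult \<theta> n f (astar \<theta> n f) (\<lambda>i. m i + m i) = f m * cnj (f m)"
proof -
  define g where "g = astar \<theta> n f"
  have star_below: "b = m \<or> lexless b m" if gb: "g b \<noteq> 0" for b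
  proof -
    obtain a where a: "f a \<noteq> 0" "\<forall>i. b i \<le> a i" "nice n b"
      using astar_nz[of \<theta> n f b] gb g_def by auto
    have na: "nice n a" using Aelem_nice[OF f a(1)] .
    show ?thesis
    proof (cases "b = a")
      case True then show ?thesis using below a by auto
    next
      case False
      then have "lexless b a" using lex_pointwise[OF na a(2)] by auto
      then show ?thesis using below a(1) lex_trans by blast
    qed
  qed
  have star_mu: "g m = cnj (f m)"
  proof -
    have finf: "finite {a. f a \<noteq> 0}" using f Aelem_def by auto
    have "g m = (\<Sum>a\<in>{a. f a \<noteq> 0}. cnj (f a) * ncoeff \<theta> n (oddp a) (evp a) m)"
      unfolding g_def astar_apply ..
    also have "\<dots> = (\<Sum>a\<in>{a. f a \<noteq> 0}. if a = m then cnj (f m) else 0)"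
    proof (rule sum.cong[OF refl])
      fix a assume a: "a \<in> {a. f a \<noteq> 0}"
      show "cnj (f a) * ncoeff \<theta> n (oddp a) (evp a) m = (if a = m then cnj (f m) else 0)"
      proof (cases "a = m")
        case True
        have "ncoeff \<theta> n (oddp m) (evp m) m = 1"
          using ncoeff_top[OF nice_oddp[OF mu] nice_evp[OF mu], of \<theta>] oddp_evp[of m] by simp
        then show ?thesis using True by simp
      next
        case False
        have "ncoeff \<theta> n (oddp a) (evp a) m = 0"
        proof (rule ccontr)
          assume "ncoeff \<theta> n (oddp a) (evp a) m \<noteq> 0"
          from ncoeff_nz[OF this] have "\<forall>i. m i \<le> a i" by (metis oddp_evp)
          moreover have "nice n a" using Aelem_nice[OF f] a by auto
          ultimately have "lexless m a" using lex_pointwise[of n a m] False by blast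
          moreover have "lexless a m" using below a False by auto
          ultimately show False using lex_trans lex_irrefl by blast
        qed
        then show ?thesis using False by simp
      qed
    qed
    also have "\<dots> = (if f m \<noteq> 0 then cnj (f m) else 0)"
      using sum.delta[OF finf, of m "\<lambda>_. cnj (f m)"] by simp
    also have "\<dots> = cnj (f m)" by simp
    finally show ?thesis .
  qed
  have fing: "finite {b. g b \<noteq> 0}" using fs g_def Aelem_def by auto
  have finf: "finite {a. f a \<noteq> 0}" using f Aelem_def by auto
  have trm: "f a * g b * ncoeff \<theta> n a b (\<lambda>i. m i + m i) = (if a = m \<and> b = m then f m * g m else 0)"
    if a: "f a \<noteq> 0" and b: "g b \<noteq> 0" for a b
  proof (cases "ncoeff \<theta> n a b (\<lambda>i. m i + m i) = 0")
    case False
    from ncoeff_nz[OF False] have le: "\<forall>i. m i + m i \<le> a i + b i" by simp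
    have nb: "nice n b" using Aelem_nice[OF fs] b g_def by auto
    have na: "nice n a" using Aelem_nice[OF f] a by auto
    from lex_sum_top[OF na nb _ _ le] below a star_below[OF b]
    have "a = m \<and> b = m" by auto
    moreover have "ncoeff \<theta> n m m (\<lambda>i. m i + m i) = 1" using ncoeff_top[OF mu mu] .
    ultimately show ?thesis by simp
  next
    case True
    moreover have "ncoeff \<theta> n m m (\<lambda>i. m i + m i) = 1" using ncoeff_top[OF mu mu] .
    ultimately show ?thesis by auto
  qed
  have "amult \<theta> n f g (\<lambda>i. m i + m i) =
     (\<Sum>a\<in>{a. f a \<noteq> 0}. \<Sum>b\<in>{b. g b \<noteq> 0}. if a = m \<and> b = m then f m * g m else 0)"
    unfolding amult_def
    apply (rule sum.cong[OF refl])
    apply (rule sum.cong[OF refl])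
    using trm by simp
  also have "\<dots> = (\<Sum>a\<in>{a. f a \<noteq> 0}. if a = m then (if g m \<noteq> 0 then f m * g m else 0) else 0)"
  proof (rule sum.cong[OF refl])
    fix a
    show "(\<Sum>b\<in>{b. g b \<noteq> 0}. if a = m \<and> b = m then f m * g m else 0) =
       (if a = m then (if g m \<noteq> 0 then f m * g m else 0) else 0)"
    proof (cases "a = m")
      case True
      then show ?thesis using sum.delta[OF fing, of m "\<lambda>_. f m * g m"] by simp
    next
      case False then show ?thesis by simp
    qed
  qed
  also have "\<dots> = (if f m \<noteq> 0 then (if g m \<noteq> 0 then f m * g m else 0) else 0)"
    using sum.delta[OF finf, of m "\<lambda>_. (if g m \<noteq> 0 then f m * g m else 0)"] by simp
  also have "\<dots> = f m * cnj (f m)" using star_mu by simp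
  finally show ?thesis unfolding g_def .
qed

lemma lex_not_less_zero: "\<not> lexless a (\<lambda>_. 0)"
  unfolding lexless_def by auto

lemma key_scalar:
  fixes k :: nat
  assumes A: "\<forall>l<k. Aelem n (f l)" and As: "\<forall>l<k. Aelem n (astar \<theta> n (f l))"
    and h: "\<forall>c. (\<Sum>l<k. amult \<theta> n (f l) (astar \<theta> n (f l)) c) \<noteq> 0 \<longrightarrow>
               c = (\<lambda>_. 0) \<or> (\<exists>l<k. f l c \<noteq> 0)"
  shows "\<forall>l<k. \<forall>a. f l a \<noteq> 0 \<longrightarrow> a = (\<lambda>_. 0)"
proof -
  define S where "S = insert (\<lambda>_. 0) (\<Union>l<k. {a. f l a \<noteq> 0})"
  have "finite (\<Union>l<k. {a. f l a \<noteq> 0})"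
    by (rule finite_UN_I) (use A in \<open>auto simp: Aelem_def\<close>)
  then have finS: "finite S" unfolding S_def by simp
  have niceS: "\<forall>a\<in>S. nice n a" unfolding S_def using A Aelem_nice by (auto simp: nice_def)
  obtain m where m: "m \<in> S" "\<forall>a\<in>S. a = m \<or> lexless a m"
    using lex_max[OF finS _ niceS] unfolding S_def by blast
  have nm: "nice n m" using niceS m by auto
  have below: "\<forall>a. f l a \<noteq> 0 \<longrightarrow> a = m \<or> lexless a m" if "l < k" for l
    using m(2) that unfolding S_def by blast
  have m0: "m = (\<lambda>_. 0)"
  proof (rule ccontr)
    assume mne: "m \<noteq> (\<lambda>_. 0)"
    then obtain l0 where l0: "l0 < k" "f l0 m \<noteq> 0" using m(1) unfolding S_def by auto
    have "(\<Sum>l<k. amult \<theta> n (f l) (astar \<theta> n (f l)) (\<lambda>i. m i + m i))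
        = (\<Sum>l<k. f l m * cnj (f l m))"
      using amult_astar_top[OF _ _ nm] A As below by (intro sum.cong refl) auto
    also have "\<dots> = of_real (\<Sum>l<k. (cmod (f l m))^2)"
      unfolding of_real_sum by (simp add: complex_norm_square[symmetric])
    finally have eq: "(\<Sum>l<k. amult \<theta> n (f l) (astar \<theta> n (f l)) (\<lambda>i. m i + m i))
        = of_real (\<Sum>l<k. (cmod (f l m))^2)" .
    have "0 < (\<Sum>l<k. (cmod (f l m))^2)"
      by (rule sum_pos2[of _ l0]) (use l0 in auto)
    then have "(\<Sum>l<k. amult \<theta> n (f l) (astar \<theta> n (f l)) (\<lambda>i. m i + m i)) \<noteq> 0"
      unfolding eq by (metis of_real_eq_0_iff less_irrefl)
    then have "(\<lambda>i. m i + m i) = (\<lambda>_. 0) \<or> (\<exists>l<k. f l (\<lambda>i. m i + m i) \<noteq> 0)"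
      using h by blast
    moreover have "(\<lambda>i. m i + m i) \<noteq> (\<lambda>_. 0)"
    proof
      assume "(\<lambda>i. m i + m i) = (\<lambda>_. 0)"
      then have "m = (\<lambda>_. 0)" by (auto simp: fun_eq_iff dest: fun_cong)
      then show False using mne by simp
    qed
    ultimately obtain l where l: "l < k" "f l (\<lambda>i. m i + m i) \<noteq> 0" by auto
    then have "(\<lambda>i. m i + m i) \<in> S" unfolding S_def by auto
    then have c: "(\<lambda>i. m i + m i) = m \<or> lexless (\<lambda>i. m i + m i) m" using m(2) by blast
    have n2: "nice n (\<lambda>i. m i + m i)" using nm unfolding nice_def by auto
    have ne2: "m \<noteq> (\<lambda>i. m i + m i)"
    proof
      assume "m = (\<lambda>i. m i + m i)"
      then have "m = (\<lambda>_. 0)" by (auto simp: fun_eq_iff dest: fun_cong[where x=x for x])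
      then show False using mne by simp
    qed
    have "lexless m (\<lambda>i. m i + m i)" using lex_pointwise[OF n2 _ ne2] by simp
    then show False using c ne2 lex_trans lex_irrefl by metis
  qed
  show ?thesis
  proof (intro allI impI)
    fix l a assume "l < k" "f l a \<noteq> 0"
    then have "a = m \<or> lexless a m" using below by blast
    then show "a = (\<lambda>_. 0)" using m0 lex_not_less_zero by auto
  qed
qed




lemma sum_split_add: "(\<Sum>i<(a::nat)+b. g i) = (\<Sum>i<a. g i) + (\<Sum>i<b. g (a+i))"
  by (induct b) (auto simp: add.assoc)

definition cmul :: "nat \<Rightarrow> (nat \<Rightarrow> nat \<Rightarrow> complex) \<Rightarrow> (nat \<Rightarrow> nat \<Rightarrow> complex) \<Rightarrow> nat \<Rightarrow> nat \<Rightarrow> complex" where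
  "cmul k A B = (\<lambda>i j. \<Sum>l<k. A i l * B l j)"

definition cadj :: "(nat \<Rightarrow> nat \<Rightarrow> complex) \<Rightarrow> nat \<Rightarrow> nat \<Rightarrow> complex" where
  "cadj A = (\<lambda>i j. cnj (A j i))"

definition cproj :: "nat \<Rightarrow> (nat \<Rightarrow> nat \<Rightarrow> complex) \<Rightarrow> bool" where
  "cproj k A \<longleftrightarrow> (\<forall>i<k. \<forall>j<k. cmul k A A i j = A i j \<and> cnj (A j i) = A i j)"

definition ctr :: "nat \<Rightarrow> (nat \<Rightarrow> nat \<Rightarrow> complex) \<Rightarrow> complex" where
  "ctr k A = (\<Sum>i<k. A i i)"

definition orthonormal :: "nat \<Rightarrow> nat \<Rightarrow> (nat \<Rightarrow> nat \<Rightarrow> complex) \<Rightarrow> bool" where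
  "orthonormal k r u \<longleftrightarrow> (\<forall>a<r. \<forall>b<r. (\<Sum>i<k. cnj (u a i) * u b i) = (if a = b then 1 else 0))"

lemma gram:
  fixes K :: nat
  assumes "orthonormal k K f"
  shows "(\<Sum>l<k. (\<Sum>c<K. A c * cnj (f c l)) * (\<Sum>d<K. f d l * B d)) = (\<Sum>c<K. A c * B c)"
proof -
  have "(\<Sum>l<k. (\<Sum>c<K. A c * cnj (f c l)) * (\<Sum>d<K. f d l * B d))
      = (\<Sum>l<k. \<Sum>c<K. \<Sum>d<K. A c * B d * (cnj (f c l) * f d l))"
    by (simp add: sum_distrib_left sum_distrib_right algebra_simps)
  also have "\<dots> = (\<Sum>c<K. \<Sum>l<k. \<Sum>d<K. A c * B d * (cnj (f c l) * f d l))"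
    by (rule sum.swap)
  also have "\<dots> = (\<Sum>c<K. \<Sum>d<K. \<Sum>l<k. A c * B d * (cnj (f c l) * f d l))"
    by (intro sum.cong refl sum.swap)
  also have "\<dots> = (\<Sum>c<K. \<Sum>d<K. A c * B d * (\<Sum>l<k. cnj (f c l) * f d l))"
    by (simp add: sum_distrib_left)
  also have "\<dots> = (\<Sum>c<K. \<Sum>d<K. if d = c then A c * B c else 0)"
    using assms unfolding orthonormal_def by (intro sum.cong refl) auto
  also have "\<dots> = (\<Sum>c<K. A c * B c)" by simp
  finally show ?thesis .
qed

lemma trace_inv:
  assumes U: "\<forall>i<k. \<forall>j<k. cmul k (cadj U) U i j = (if i = j then 1 else 0)"
  shows "ctr k (cmul k (cmul k U Z) (cadj U)) = ctr k Z"
proof -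
  have "ctr k (cmul k (cmul k U Z) (cadj U)) = (\<Sum>i<k. \<Sum>l<k. \<Sum>m<k. U i m * Z m l * cnj (U i l))"
    unfolding ctr_def cmul_def cadj_def by (simp add: sum_distrib_right)
  also have "\<dots> = (\<Sum>l<k. \<Sum>i<k. \<Sum>m<k. U i m * Z m l * cnj (U i l))"
    by (rule sum.swap)
  also have "\<dots> = (\<Sum>l<k. \<Sum>m<k. \<Sum>i<k. U i m * Z m l * cnj (U i l))"
    by (intro sum.cong refl sum.swap)
  also have "\<dots> = (\<Sum>m<k. \<Sum>l<k. \<Sum>i<k. U i m * Z m l * cnj (U i l))"
    by (rule sum.swap)
  also have "\<dots> = (\<Sum>m<k. \<Sum>l<k. Z m l * (\<Sum>i<k. cnj (U i l) * U i m))"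
    by (simp add: sum_distrib_left algebra_simps)
  also have "\<dots> = (\<Sum>m<k. \<Sum>l<k. if l = m then Z m m else 0)"
    using U unfolding cmul_def cadj_def by (intro sum.cong refl) auto
  also have "\<dots> = ctr k Z" unfolding ctr_def by simp
  finally show ?thesis .
qed

lemma cproj_herm: "cproj k P \<Longrightarrow> i < k \<Longrightarrow> j < k \<Longrightarrow> cnj (P i j) = P j i"
  unfolding cproj_def by auto

lemma cproj_trace_sq:
  assumes "cproj k P"
  shows "ctr k P = of_real (\<Sum>i<k. \<Sum>l<k. (cmod (P i l))^2)"
proof -
  have "ctr k P = (\<Sum>i<k. \<Sum>l<k. P i l * P l i)"
    unfolding ctr_def using assms unfolding cproj_def cmul_def by (intro sum.cong refl) auto
  also have "\<dots> = (\<Sum>i<k. \<Sum>l<k. P i l * cnj (P i l))"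
    using cproj_herm[OF assms] by (intro sum.cong refl) auto
  also have "\<dots> = of_real (\<Sum>i<k. \<Sum>l<k. (cmod (P i l))^2)"
    unfolding of_real_sum complex_norm_square ..
  finally show ?thesis .
qed

lemma fix_vec:
  assumes on: "orthonormal k r w" and Q: "\<forall>i<k. \<forall>j<k. Q i j = (\<Sum>b<r. w b i * cnj (w b j))"
    and a: "a < r" and i: "i < k"
  shows "(\<Sum>l<k. Q i l * w a l) = w a i"
proof -
  have "(\<Sum>l<k. Q i l * w a l) = (\<Sum>l<k. (\<Sum>b<r. w b i * cnj (w b l)) * (\<Sum>d<r. w d l * (if d = a then 1 else 0)))"
    using Q i a by (intro sum.cong refl) (auto simp: if_distrib cong: if_cong)
  also have "\<dots> = (\<Sum>c<r. w c i * (if c = a then 1 else 0))"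
    by (rule gram[OF on])
  also have "\<dots> = w a i" using a by (simp add: if_distrib cong: if_cong)
  finally show ?thesis .
qed

lemma decomp_step:
  assumes P: "cproj k P" and uu: "(\<Sum>i<k. cnj (u i) * u i) = 1"
    and Pu: "\<forall>i<k. (\<Sum>l<k. P i l * u l) = u i"
  defines "P' \<equiv> (\<lambda>i j. P i j - u i * cnj (u j))"
  shows "cproj k P'" "ctr k P' = ctr k P - 1" "\<forall>i<k. (\<Sum>l<k. P' i l * u l) = 0"
proof -
  have uP: "(\<Sum>l<k. cnj (u l) * P l j) = cnj (u j)" if j: "j < k" for j
  proof -
    have "(\<Sum>l<k. cnj (u l) * P l j) = (\<Sum>l<k. cnj (P j l * u l))"
      using cproj_herm[OF P j] by (intro sum.cong refl) (auto simp: mult.commute)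
    also have "\<dots> = cnj (\<Sum>l<k. P j l * u l)" by simp
    also have "\<dots> = cnj (u j)" using Pu j by simp
    finally show ?thesis .
  qed
  have "cmul k P' P' i j = P' i j" if i: "i < k" and j: "j < k" for i j
  proof -
    have "cmul k P' P' i j = (\<Sum>l<k. P i l * P l j) - u i * (\<Sum>l<k. cnj (u l) * P l j)
        - (\<Sum>l<k. P i l * u l) * cnj (u j) + u i * (\<Sum>l<k. cnj (u l) * u l) * cnj (u j)"
      unfolding cmul_def P'_def
      by (simp add: algebra_simps sum_subtractf sum_distrib_left sum_distrib_right sum.distrib)
    also have "\<dots> = P i j - u i * cnj (u j)"
      using P i j uu Pu uP[OF j] unfolding cproj_def cmul_def by simp
    finally show ?thesis unfolding P'_def .
  qed
  moreover have "cnj (P' j i) = P' i j" if i: "i < k" and j: "j < k" for i j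
    unfolding P'_def using cproj_herm[OF P j i] by simp
  ultimately show "cproj k P'" unfolding cproj_def by blast
  show "ctr k P' = ctr k P - 1"
  proof -
    have "ctr k P' = ctr k P - (\<Sum>i<k. cnj (u i) * u i)"
      unfolding ctr_def P'_def by (simp add: sum_subtractf mult.commute)
    then show ?thesis using uu by simp
  qed
  show "\<forall>i<k. (\<Sum>l<k. P' i l * u l) = 0"
  proof (intro allI impI)
    fix i assume i: "i < k"
    have "(\<Sum>l<k. P' i l * u l) = (\<Sum>l<k. P i l * u l) - u i * (\<Sum>l<k. cnj (u l) * u l)"
      unfolding P'_def by (simp add: algebra_simps sum_subtractf sum_distrib_left)
    then show "(\<Sum>l<k. P' i l * u l) = 0" using Pu i uu by simp
  qed
qed

lemma orth_perp:
  assumes on: "orthonormal k r w" and Q: "\<forall>i<k. \<forall>j<k. Q i j = (\<Sum>b<r. w b i * cnj (w b j))"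
    and herm: "\<forall>i<k. \<forall>j<k. cnj (Q i j) = Q j i"
    and Qu: "\<forall>i<k. (\<Sum>l<k. Q i l * u l) = 0" and a: "a < r"
  shows "(\<Sum>i<k. cnj (w a i) * u i) = 0"
proof -
  have "(\<Sum>i<k. cnj (w a i) * u i) = (\<Sum>i<k. cnj (\<Sum>l<k. Q i l * w a l) * u i)"
    using fix_vec[OF on Q a] by simp
  also have "\<dots> = (\<Sum>i<k. \<Sum>l<k. Q l i * cnj (w a l) * u i)"
    using herm by (simp add: sum_distrib_right)
  also have "\<dots> = (\<Sum>l<k. \<Sum>i<k. Q l i * cnj (w a l) * u i)"
    by (rule sum.swap)
  also have "\<dots> = (\<Sum>l<k. cnj (w a l) * (\<Sum>i<k. Q l i * u i))"
    by (simp add: sum_distrib_left algebra_simps)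
  also have "\<dots> = 0" using Qu by simp
  finally show ?thesis .
qed

lemma decomp_aux:
  fixes N :: nat
  shows "cproj k P \<Longrightarrow> Re (ctr k P) < real N \<Longrightarrow>
    \<exists>r w. orthonormal k r w \<and> (\<forall>i<k. \<forall>j<k. P i j = (\<Sum>a<r. w a i * cnj (w a j)))"
proof (induction N arbitrary: P)
  case 0
  have "Re (ctr k P) \<ge> 0" unfolding cproj_trace_sq[OF 0(1)] by (simp add: sum_nonneg)
  then show ?case using 0 by simp
next
  case (Suc N)
  note P = Suc.prems(1)
  show ?case
  proof (cases "\<forall>i<k. \<forall>j<k. P i j = 0")
    case True
    then show ?thesis by (intro exI[of _ 0]) (auto simp: orthonormal_def)
  next
    case False
    then obtain i0 j0 where ij0: "i0 < k" "j0 < k" "P i0 j0 \<noteq> 0" by auto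
    define s where "s = (\<Sum>i<k. (cmod (P i j0))^2)"
    have spos: "0 < s" unfolding s_def by (rule sum_pos2[of _ i0]) (use ij0 in auto)
    define c where "c = complex_of_real (sqrt s)"
    have c0: "c \<noteq> 0" using spos c_def by simp
    have cc: "cnj c * c = of_real s" unfolding c_def using spos
      by (simp flip: of_real_mult)
    define u where "u = (\<lambda>i. P i j0 / c)"
    have uu: "(\<Sum>i<k. cnj (u i) * u i) = 1"
    proof -
      have "(\<Sum>i<k. cnj (u i) * u i) = (\<Sum>i<k. P i j0 * cnj (P i j0)) / (cnj c * c)"
        unfolding u_def by (simp add: sum_divide_distrib mult.commute)
      also have "\<dots> = of_real s / of_real s"
        unfolding cc s_def of_real_sum complex_norm_square ..
      finally show ?thesis using spos by simp
    qed
    have Pu: "\<forall>i<k. (\<Sum>l<k. P i l * u l) = u i"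
    proof (intro allI impI)
      fix i assume i: "i < k"
      have "(\<Sum>l<k. P i l * u l) = cmul k P P i j0 / c"
        unfolding u_def cmul_def by (simp add: sum_divide_distrib)
      also have "\<dots> = u i" using P i ij0 unfolding cproj_def u_def by simp
      finally show "(\<Sum>l<k. P i l * u l) = u i" .
    qed
    define P' where "P' = (\<lambda>i j. P i j - u i * cnj (u j))"
    note st = decomp_step[OF P uu Pu, folded P'_def]
    have "Re (ctr k P') < real N" using st(2) Suc.prems(2) by simp
    from Suc.IH[OF st(1) this] obtain r w where
      on: "orthonormal k r w" and dec: "\<forall>i<k. \<forall>j<k. P' i j = (\<Sum>a<r. w a i * cnj (w a j))" by blast
    have Qu: "\<forall>i<k. (\<Sum>l<k. P' i l * u l) = 0" using st(3) unfolding P'_def by simp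
    have herm': "\<forall>i<k. \<forall>j<k. cnj (P' i j) = P' j i" using cproj_herm[OF st(1)] by auto
    have perp: "(\<Sum>i<k. cnj (w a i) * u i) = 0" if "a < r" for a
      by (rule orth_perp[OF on dec herm' Qu that])
    define v where "v = (\<lambda>a. if a < r then w a else u)"
    have "orthonormal k (Suc r) v"
      unfolding orthonormal_def
    proof (intro allI impI)
      fix a b assume a: "a < Suc r" and b: "b < Suc r"
      show "(\<Sum>i<k. cnj (v a i) * v b i) = (if a = b then 1 else 0)"
      proof (cases "a < r")
        case True
        show ?thesis
        proof (cases "b < r")
          case True then show ?thesis using on \<open>a < r\<close> unfolding orthonormal_def v_def by simp
        next
          case False then have "b = r" using b by simp
          then show ?thesis using perp[OF \<open>a < r\<close>] \<open>a < r\<close> unfolding v_def by simp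
        qed
      next
        case False then have ar: "a = r" using a by simp
        show ?thesis
        proof (cases "b < r")
          case True
          have "(\<Sum>i<k. cnj (u i) * w b i) = cnj (\<Sum>i<k. cnj (w b i) * u i)"
            by (simp add: mult.commute)
          then show ?thesis using perp[OF True] True ar unfolding v_def by simp
        next
          case False then have "b = r" using b by simp
          then show ?thesis using uu ar unfolding v_def by simp
        qed
      qed
    qed
    moreover have "\<forall>i<k. \<forall>j<k. P i j = (\<Sum>a<Suc r. v a i * cnj (v a j))"
    proof (intro allI impI)
      fix i j assume "i < k" "j < k"
      then have "P i j = P' i j + u i * cnj (u j)" unfolding P'_def by simp
      also have "\<dots> = (\<Sum>a<r. v a i * cnj (v a j)) + u i * cnj (u j)"
        using dec \<open>i < k\<close> \<open>j < k\<close> unfolding v_def by simp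
      also have "\<dots> = (\<Sum>a<Suc r. v a i * cnj (v a j))" unfolding v_def by simp
      finally show "P i j = (\<Sum>a<Suc r. v a i * cnj (v a j))" .
    qed
    ultimately show ?thesis by blast
  qed
qed

lemma decomp:
  assumes "cproj k P"
  shows "\<exists>r w. orthonormal k r w \<and> (\<forall>i<k. \<forall>j<k. P i j = (\<Sum>a<r. w a i * cnj (w a j)))"
proof -
  obtain N :: nat where "Re (ctr k P) < real N" using reals_Archimedean2 by blast
  then show ?thesis using decomp_aux[OF assms] by blast
qed

lemma decomp_trace:
  assumes on: "orthonormal k r w" and P: "\<forall>i<k. \<forall>j<k. P i j = (\<Sum>a<r. w a i * cnj (w a j))"
  shows "ctr k P = of_nat r"
proof -
  have "ctr k P = (\<Sum>i<k. \<Sum>a<r. cnj (w a i) * w a i)"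
    unfolding ctr_def using P by (simp add: mult.commute)
  also have "\<dots> = (\<Sum>a<r. \<Sum>i<k. cnj (w a i) * w a i)" by (rule sum.swap)
  also have "\<dots> = (\<Sum>a<r. 1)" using on unfolding orthonormal_def by simp
  finally show ?thesis by simp
qed

lemma cproj_trace_nat: "cproj k P \<Longrightarrow> \<exists>r. ctr k P = of_nat r"
  using decomp decomp_trace by blast

definition cid :: "nat \<Rightarrow> nat \<Rightarrow> complex" where "cid i j = (if i = j then 1 else 0)"

lemma sum_cid_left: "i < k \<Longrightarrow> (\<Sum>l<k. cid i l * g l) = g i"
proof -
  assume i: "i < k"
  have "(\<Sum>l<k. cid i l * g l) = (\<Sum>l<k. if i = l then g l else 0)"
    unfolding cid_def by (intro sum.cong) auto
  then show ?thesis using i by simp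
qed

lemma sum_cid_right: "j < k \<Longrightarrow> (\<Sum>l<k. g l * cid l j) = g j"
proof -
  assume j: "j < k"
  have "(\<Sum>l<k. g l * cid l j) = (\<Sum>l<k. if l = j then g l else 0)"
    unfolding cid_def by (intro sum.cong) auto
  then show ?thesis using j by simp
qed

lemma sum_restrict: "r \<le> (k::nat) \<Longrightarrow> (\<Sum>d<k. if d < r then g d else 0) = (\<Sum>d<r. g d)"
proof -
  assume rk: "r \<le> k"
  have "(\<Sum>d<k. if d < r then g d else 0) = (\<Sum>d\<in>{d\<in>{..<k}. d < r}. g d)"
    by (rule sum.inter_filter[symmetric]) simp
  also have "{d\<in>{..<k}. d < r} = {..<r}" using rk by auto
  finally show ?thesis .
qed

lemma cproj_compl:
  assumes X: "cproj k X"
  shows "cproj k (\<lambda>i j. cid i j - X i j)" "ctr k (\<lambda>i j. cid i j - X i j) = of_nat k - ctr k X"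
proof -
  have "cmul k (\<lambda>i j. cid i j - X i j) (\<lambda>i j. cid i j - X i j) i j = cid i j - X i j"
    if i: "i < k" and j: "j < k" for i j
  proof -
    have "cmul k (\<lambda>i j. cid i j - X i j) (\<lambda>i j. cid i j - X i j) i j
       = (\<Sum>l<k. cid i l * cid l j) - (\<Sum>l<k. cid i l * X l j) - (\<Sum>l<k. X i l * cid l j)
         + (\<Sum>l<k. X i l * X l j)"
      unfolding cmul_def by (simp add: algebra_simps sum_subtractf sum.distrib)
    also have "\<dots> = cid i j - X i j - X i j + X i j"
      using sum_cid_left[OF i] sum_cid_right[OF j] X i j unfolding cproj_def cmul_def
      by simp
    finally show ?thesis by simp
  qed
  moreover have "cnj (cid j i - X j i) = cid i j - X i j" if "i < k" "j < k" for i j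
    using cproj_herm[OF X that(2,1)] by (simp add: cid_def)
  ultimately show "cproj k (\<lambda>i j. cid i j - X i j)" unfolding cproj_def by blast
  show "ctr k (\<lambda>i j. cid i j - X i j) = of_nat k - ctr k X"
    unfolding ctr_def by (simp add: sum_subtractf cid_def)
qed

lemma combine:
  assumes X: "cproj k X"
    and on1: "orthonormal k r x" and d1: "\<forall>i<k. \<forall>j<k. X i j = (\<Sum>a<r. x a i * cnj (x a j))"
    and on2: "orthonormal k s x'" and d2: "\<forall>i<k. \<forall>j<k. cid i j - X i j = (\<Sum>a<s. x' a i * cnj (x' a j))"
  defines "e \<equiv> (\<lambda>c. if c < r then x c else x' (c - r))"
  shows "orthonormal k (r+s) e" "\<forall>i<k. \<forall>j<k. (\<Sum>c<r+s. e c i * cnj (e c j)) = cid i j"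
proof -
  have Xx': "\<forall>i<k. (\<Sum>l<k. X i l * x' b l) = 0" if b: "b < s" for b
  proof (intro allI impI)
    fix i assume i: "i < k"
    have "(\<Sum>l<k. (cid i l - X i l) * x' b l) = x' b i"
      by (rule fix_vec[OF on2 _ b i]) (use d2 in auto)
    then have "(\<Sum>l<k. cid i l * x' b l) - (\<Sum>l<k. X i l * x' b l) = x' b i"
      by (simp add: algebra_simps sum_subtractf)
    then show "(\<Sum>l<k. X i l * x' b l) = 0" using sum_cid_left[OF i] by simp
  qed
  have herm: "\<forall>i<k. \<forall>j<k. cnj (X i j) = X j i" using cproj_herm[OF X] by auto
  have perp: "(\<Sum>i<k. cnj (x a i) * x' b i) = 0" if "a < r" "b < s" for a b
    by (rule orth_perp[OF on1 d1 herm Xx'[OF that(2)] that(1)])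
  show "orthonormal k (r+s) e"
    unfolding orthonormal_def
  proof (intro allI impI)
    fix a b assume a: "a < r+s" and b: "b < r+s"
    show "(\<Sum>i<k. cnj (e a i) * e b i) = (if a = b then 1 else 0)"
    proof (cases "a < r")
      case True
      show ?thesis
      proof (cases "b < r")
        case True then show ?thesis using on1 \<open>a < r\<close> unfolding orthonormal_def e_def by simp
      next
        case False
        then show ?thesis using perp[OF \<open>a < r\<close>, of "b - r"] \<open>a < r\<close> b unfolding e_def by auto
      qed
    next
      case False
      show ?thesis
      proof (cases "b < r")
        case True
        have "(\<Sum>i<k. cnj (x' (a - r) i) * x b i) = cnj (\<Sum>i<k. cnj (x b i) * x' (a - r) i)"
          by (simp add: mult.commute)
        then show ?thesis using perp[OF True, of "a - r"] True False a unfolding e_def by auto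
      next
        case False
        then have "(a - r = b - r) = (a = b)" using \<open>\<not> a < r\<close> by auto
        then show ?thesis using on2 False \<open>\<not> a < r\<close> a b unfolding orthonormal_def e_def by auto
      qed
    qed
  qed
  show "\<forall>i<k. \<forall>j<k. (\<Sum>c<r+s. e c i * cnj (e c j)) = cid i j"
  proof (intro allI impI)
    fix i j assume i: "i < k" and j: "j < k"
    have "(\<Sum>c<r+s. e c i * cnj (e c j)) = (\<Sum>c<r. x c i * cnj (x c j)) + (\<Sum>c<s. x' c i * cnj (x' c j))"
      unfolding sum_split_add e_def by simp
    also have "\<dots> = X i j + (cid i j - X i j)" using d1 d2 i j by simp
    finally show "(\<Sum>c<r+s. e c i * cnj (e c j)) = cid i j" by simp
  qed
qed

lemma full_family:
  assumes X: "cproj k X"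
  shows "\<exists>r e. orthonormal k k e \<and> (\<forall>i<k. \<forall>j<k. (\<Sum>c<k. e c i * cnj (e c j)) = cid i j)
     \<and> (\<forall>i<k. \<forall>j<k. X i j = (\<Sum>c<r. e c i * cnj (e c j))) \<and> ctr k X = of_nat r \<and> r \<le> k"
proof -
  obtain r x where on1: "orthonormal k r x" and d1: "\<forall>i<k. \<forall>j<k. X i j = (\<Sum>a<r. x a i * cnj (x a j))"
    using decomp[OF X] by blast
  obtain s x' where on2: "orthonormal k s x'" and d2: "\<forall>i<k. \<forall>j<k. cid i j - X i j = (\<Sum>a<s. x' a i * cnj (x' a j))"
    using decomp[OF cproj_compl(1)[OF X]] by blast
  have t1: "ctr k X = of_nat r" by (rule decomp_trace[OF on1 d1])
  have "ctr k (\<lambda>i j. cid i j - X i j) = of_nat s" by (rule decomp_trace[OF on2]) (use d2 in auto)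
  then have "of_nat k - ctr k X = (of_nat s :: complex)" using cproj_compl(2)[OF X] by simp
  then have "of_nat k = (of_nat (r + s) :: complex)" using t1 by (simp add: algebra_simps)
  then have rs: "r + s = k" using of_nat_eq_iff by metis
  define e where "e = (\<lambda>c. if c < r then x c else x' (c - r))"
  note cb = combine[OF X on1 d1 on2 d2, folded e_def, unfolded rs]
  have X': "\<forall>i<k. \<forall>j<k. X i j = (\<Sum>c<r. e c i * cnj (e c j))" using d1 unfolding e_def by simp
  show ?thesis
    apply (intro exI[of _ r] exI[of _ e])
    using cb X' t1 rs unfolding e_def by auto
qed

lemma unitary_equiv:
  assumes X: "cproj k X" and Y: "cproj k Y" and tr: "ctr k X = ctr k Y"
  shows "\<exists>U. (\<forall>i<k. \<forall>j<k. cmul k U (cadj U) i j = cid i j \<and> cmul k (cadj U) U i j = cid i j)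
     \<and> (\<forall>i<k. \<forall>j<k. X i j = cmul k (cmul k U Y) (cadj U) i j)"
proof -
  obtain r e where on1: "orthonormal k k e" and c1: "\<forall>i<k. \<forall>j<k. (\<Sum>c<k. e c i * cnj (e c j)) = cid i j"
    and d1: "\<forall>i<k. \<forall>j<k. X i j = (\<Sum>c<r. e c i * cnj (e c j))" and t1: "ctr k X = of_nat r" and rk: "r \<le> k"
    using full_family[OF X] by blast
  obtain r' f where on2: "orthonormal k k f" and c2: "\<forall>i<k. \<forall>j<k. (\<Sum>c<k. f c i * cnj (f c j)) = cid i j"
    and d2: "\<forall>i<k. \<forall>j<k. Y i j = (\<Sum>c<r'. f c i * cnj (f c j))" and t2: "ctr k Y = of_nat r'"
    using full_family[OF Y] by blast
  have rr: "r' = r" using t1 t2 tr by simp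
  define U where "U = (\<lambda>i j. \<Sum>c<k. e c i * cnj (f c j))"
  have cU: "cnj (U j l) = (\<Sum>d<k. f d l * cnj (e d j))" for j l
    unfolding U_def by (simp add: mult.commute)
  have "cmul k U (cadj U) i j = cid i j" if "i < k" "j < k" for i j
  proof -
    have "cmul k U (cadj U) i j = (\<Sum>l<k. (\<Sum>c<k. e c i * cnj (f c l)) * (\<Sum>d<k. f d l * cnj (e d j)))"
      unfolding cmul_def cadj_def cU unfolding U_def ..
    also have "\<dots> = (\<Sum>c<k. e c i * cnj (e c j))" by (rule gram[OF on2])
    finally show ?thesis using c1 that by simp
  qed
  moreover have "cmul k (cadj U) U i j = cid i j" if "i < k" "j < k" for i j
  proof -
    have "cmul k (cadj U) U i j = (\<Sum>l<k. (\<Sum>c<k. f c i * cnj (e c l)) * (\<Sum>d<k. e d l * cnj (f d j)))"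
      unfolding cmul_def cadj_def cU unfolding U_def ..
    also have "\<dots> = (\<Sum>c<k. f c i * cnj (f c j))" by (rule gram[OF on1])
    finally show ?thesis using c2 that by simp
  qed
  moreover have "X i j = cmul k (cmul k U Y) (cadj U) i j" if i: "i < k" and j: "j < k" for i j
  proof -
    have UY: "cmul k U Y i m = (\<Sum>c<k. (e c i * (if c < r then 1 else 0)) * cnj (f c m))" if m: "m < k" for m
    proof -
      have "cmul k U Y i m = (\<Sum>l<k. (\<Sum>c<k. e c i * cnj (f c l)) * (\<Sum>d<k. f d l * (if d < r then cnj (f d m) else 0)))"
        unfolding cmul_def U_def
      proof (rule sum.cong[OF refl])
        fix l assume "l \<in> {..<k}"
        then have "Y l m = (\<Sum>d<k. f d l * (if d < r then cnj (f d m) else 0))"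
          using d2 m rr sum_restrict[OF rk, of "\<lambda>d. f d l * cnj (f d m)"]
          by (simp add: if_distrib cong: if_cong)
        then show "(\<Sum>c<k. e c i * cnj (f c l)) * Y l m = (\<Sum>c<k. e c i * cnj (f c l)) * (\<Sum>d<k. f d l * (if d < r then cnj (f d m) else 0))"
          by simp
      qed
      also have "\<dots> = (\<Sum>c<k. e c i * (if c < r then cnj (f c m) else 0))" by (rule gram[OF on2])
      also have "\<dots> = (\<Sum>c<k. (e c i * (if c < r then 1 else 0)) * cnj (f c m))"
        by (intro sum.cong refl) auto
      finally show ?thesis .
    qed
    have "cmul k (cmul k U Y) (cadj U) i j = (\<Sum>m<k. (\<Sum>c<k. (e c i * (if c < r then 1 else 0)) * cnj (f c m)) * (\<Sum>d<k. f d m * cnj (e d j)))"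
      unfolding cmul_def[of k "cmul k U Y"] cadj_def cU using UY by (intro sum.cong refl) auto
    also have "\<dots> = (\<Sum>c<k. (e c i * (if c < r then 1 else 0)) * cnj (e c j))" by (rule gram[OF on2])
    also have "\<dots> = (\<Sum>c<k. if c < r then e c i * cnj (e c j) else 0)" by (intro sum.cong refl) auto
    also have "\<dots> = X i j" using sum_restrict[OF rk] d1 i j by simp
    finally show ?thesis by simp
  qed
  ultimately show ?thesis by blast
qed

definition bd :: "nat \<Rightarrow> (nat \<Rightarrow> nat \<Rightarrow> complex) \<Rightarrow> (nat \<Rightarrow> nat \<Rightarrow> complex) \<Rightarrow> nat \<Rightarrow> nat \<Rightarrow> complex" where
  "bd a A B = (\<lambda>i j. if i < a \<and> j < a then A i j else if a \<le> i \<and> a \<le> j then B (i - a) (j - a) else 0)"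

lemma ctr_bd: "ctr (a+b) (bd a A B) = ctr a A + ctr b B"
  unfolding ctr_def bd_def sum_split_add by simp

lemma cproj_bd:
  assumes A: "cproj a A" and B: "cproj b B"
  shows "cproj (a+b) (bd a A B)"
proof -
  have "cmul (a+b) (bd a A B) (bd a A B) i j = bd a A B i j" if i: "i < a+b" and j: "j < a+b" for i j
  proof -
    have e: "cmul (a+b) (bd a A B) (bd a A B) i j =
      (\<Sum>l<a. bd a A B i l * bd a A B l j) + (\<Sum>l<b. bd a A B i (a+l) * bd a A B (a+l) j)"
      unfolding cmul_def sum_split_add ..
    show ?thesis
    proof (cases "i < a")
      case True
      show ?thesis
      proof (cases "j < a")
        case True
        then show ?thesis unfolding e using A \<open>i < a\<close> unfolding cproj_def cmul_def bd_def by simp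
      next
        case False
        then show ?thesis unfolding e using \<open>i < a\<close> unfolding bd_def by simp
      qed
    next
      case False
      show ?thesis
      proof (cases "j < a")
        case True
        then show ?thesis unfolding e using \<open>\<not> i < a\<close> unfolding bd_def by simp
      next
        case False
        have "i - a < b" "j - a < b" using i j \<open>\<not> i < a\<close> False by auto
        then show ?thesis unfolding e using B \<open>\<not> i < a\<close> False unfolding cproj_def cmul_def bd_def by simp
      qed
    qed
  qed
  moreover have "cnj (bd a A B j i) = bd a A B i j" if i: "i < a+b" and j: "j < a+b" for i j
  proof -
    have "i - a < b" if "\<not> i < a" using i that by auto
    moreover have "j - a < b" if "\<not> j < a" using j that by auto
    ultimately show ?thesis using A B unfolding bd_def cproj_def by auto
  qed
  ultimately show ?thesis unfolding cproj_def by blast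
qed

lemma cproj_zero: "cproj k (\<lambda>i j. 0)" unfolding cproj_def cmul_def by simp

lemma cproj_cid: "cproj k cid"
  unfolding cproj_def cmul_def using sum_cid_left by (auto simp: cid_def)

lemma ctr_cid: "ctr k cid = of_nat k" unfolding ctr_def cid_def by simp




lemma ascal_0_apply: "ascal c (\<lambda>_. 0) = c" unfolding ascal_def by simp

lemma ascal_zero: "ascal 0 = 0" unfolding ascal_def by auto

lemma ascal_eq_iff: "ascal a = ascal b \<longleftrightarrow> a = b"
  by (metis ascal_0_apply)

lemma ascal_sum: "(\<Sum>l\<in>A. ascal (g l)) = ascal (\<Sum>l\<in>A. g l)"
  by (rule ext) (simp add: sum_app ascal_def)

lemma supp_ascal: "{x. ascal c x \<noteq> 0} = (if c = 0 then {} else {\<lambda>_. 0})"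
  unfolding ascal_def by auto

lemma Aelem_ascal: "Aelem n (ascal c)"
  unfolding Aelem_def supp_ascal by (auto simp: ascal_def split: if_splits)

lemma ncoeff_00: "ncoeff \<theta> n (\<lambda>_. 0) (\<lambda>_. 0) g = (if g = (\<lambda>_. 0) then 1 else 0)"
proof (cases "g = (\<lambda>_. 0)")
  case True
  have "nice n (\<lambda>_. 0)" unfolding nice_def by simp
  from ncoeff_top[OF this this, of \<theta>] True show ?thesis by simp
next
  case False
  have "ncoeff \<theta> n (\<lambda>_. 0) (\<lambda>_. 0) g = 0"
  proof (rule ccontr)
    assume "ncoeff \<theta> n (\<lambda>_. 0) (\<lambda>_. 0) g \<noteq> 0"
    from ncoeff_nz[OF this] have "g = (\<lambda>_. 0)" by auto
    then show False using False by simp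
  qed
  then show ?thesis using False by simp
qed

lemma amult_ascal: "amult \<theta> n (ascal a) (ascal b) = ascal (a * b)"
proof (rule ext)
  fix g
  show "amult \<theta> n (ascal a) (ascal b) g = ascal (a * b) g"
  proof (cases "a = 0 \<or> b = 0")
    case True
    then have "amult \<theta> n (ascal a) (ascal b) g = 0" unfolding amult_def supp_ascal by auto
    moreover have "ascal (a * b) g = 0" using True unfolding ascal_def by auto
    ultimately show ?thesis by simp
  next
    case False
    then have "amult \<theta> n (ascal a) (ascal b) g = a * b * ncoeff \<theta> n (\<lambda>_. 0) (\<lambda>_. 0) g"
      unfolding amult_def supp_ascal by (simp add: ascal_0_apply)
    then show ?thesis unfolding ncoeff_00 ascal_def by simp
  qed
qed

lemma oddp0: "oddp (\<lambda>_. 0) = (\<lambda>_. 0)" and evp0: "evp (\<lambda>_. 0) = (\<lambda>_. 0)"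
  unfolding oddp_def evp_def by auto

lemma astar_ascal: "astar \<theta> n (ascal a) = ascal (cnj a)"
proof (rule ext)
  fix g
  show "astar \<theta> n (ascal a) g = ascal (cnj a) g"
  proof (cases "a = 0")
    case True
    then have "astar \<theta> n (ascal a) g = 0" unfolding astar_apply supp_ascal by auto
    moreover have "ascal (cnj a) g = 0" using True unfolding ascal_def by auto
    ultimately show ?thesis by simp
  next
    case False
    then have "astar \<theta> n (ascal a) g = cnj a * ncoeff \<theta> n (\<lambda>_. 0) (\<lambda>_. 0) g"
      unfolding astar_apply supp_ascal by (simp add: ascal_0_apply oddp0 evp0)
    then show ?thesis unfolding ncoeff_00 ascal_def by simp
  qed
qed

definition sc :: "(nat \<Rightarrow> nat \<Rightarrow> elem) \<Rightarrow> nat \<Rightarrow> nat \<Rightarrow> complex" where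
  "sc M = (\<lambda>i j. M i j (\<lambda>_. 0))"

definition scal :: "nat \<Rightarrow> (nat \<Rightarrow> nat \<Rightarrow> elem) \<Rightarrow> bool" where
  "scal k M \<longleftrightarrow> (\<forall>i<k. \<forall>j<k. M i j = ascal (sc M i j))"

lemma mmult_sc:
  assumes "scal k M" "scal k N" "i < k" "j < k"
  shows "mmult \<theta> n k M N i j = ascal (cmul k (sc M) (sc N) i j)"
proof -
  have "mmult \<theta> n k M N i j = (\<Sum>l<k. amult \<theta> n (ascal (sc M i l)) (ascal (sc N l j)))"
    unfolding mmult_def using assms unfolding scal_def by (intro sum.cong refl) auto
  also have "\<dots> = ascal (cmul k (sc M) (sc N) i j)"
    unfolding amult_ascal ascal_sum cmul_def ..
  finally show ?thesis .
qed

lemma madj_sc: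
  assumes "scal k M" "i < k" "j < k"
  shows "madj \<theta> n M i j = ascal (cadj (sc M) i j)"
proof -
  have "M j i = ascal (sc M j i)" using assms unfolding scal_def by simp
  then show ?thesis unfolding madj_def cadj_def by (simp add: astar_ascal)
qed

lemma scal_madj: assumes "scal k M" shows "scal k (madj \<theta> n M)"
  unfolding scal_def[of k "madj \<theta> n M"] using madj_sc[OF assms] by (simp add: sc_def ascal_0_apply)

lemma sc_ascal: "sc (\<lambda>i j. ascal (C i j)) = C"
  unfolding sc_def ascal_0_apply ..

lemma scal_mmult: assumes "scal k M" "scal k N" shows "scal k (mmult \<theta> n k M N)"
  unfolding scal_def[of k "mmult \<theta> n k M N"] using mmult_sc[OF assms] by (simp add: sc_def ascal_0_apply)

lemma sc_mmult: "scal k M \<Longrightarrow> scal k N \<Longrightarrow> i < k \<Longrightarrow> j < k \<Longrightarrow> sc (mmult \<theta> n k M N) i j = cmul k (sc M) (sc N) i j"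
  using mmult_sc[of k M N] by (simp add: sc_def ascal_0_apply)

lemma sc_madj: "scal k M \<Longrightarrow> i < k \<Longrightarrow> j < k \<Longrightarrow> sc (madj \<theta> n M) i j = cadj (sc M) i j"
  using madj_sc[of k M] by (simp add: sc_def ascal_0_apply)




lemma scalar_of: "(\<forall>a. f a \<noteq> 0 \<longrightarrow> a = (\<lambda>_. 0)) \<Longrightarrow> f = ascal (f (\<lambda>_. 0))"
  by (rule ext) (auto simp: ascal_def)

lemma proj_scal:
  assumes P: "projector \<theta> n P"
  shows "scal (fst P) (snd P)"
  unfolding scal_def
proof (intro allI impI)
  fix i j assume i: "i < fst P" and j: "j < fst P"
  define k where "k = fst P"
  define M where "M = snd P"
  have im: "is_mat n P" and pr: "\<forall>i<k. \<forall>j<k. mmult \<theta> n k M M i j = M i j \<and> madj \<theta> n M i j = M i j"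
    using P unfolding projector_def k_def M_def by auto
  have A: "\<forall>l<k. Aelem n (M i l)" using im i unfolding is_mat_def k_def M_def by auto
  have st: "astar \<theta> n (M i l) = M l i" if "l < k" for l
    using pr that i unfolding madj_def k_def by metis
  have As: "\<forall>l<k. Aelem n (astar \<theta> n (M i l))" using st im i unfolding is_mat_def k_def M_def by auto
  have "(\<Sum>l<k. amult \<theta> n (M i l) (astar \<theta> n (M i l)) c) = M i i c" for c
  proof -
    have "(\<Sum>l<k. amult \<theta> n (M i l) (astar \<theta> n (M i l)) c) = (\<Sum>l<k. amult \<theta> n (M i l) (M l i) c)"
      using st by (intro sum.cong refl) auto
    also have "\<dots> = mmult \<theta> n k M M i i c" unfolding mmult_def sum_app ..
    also have "\<dots> = M i i c" using pr i k_def by simp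
    finally show ?thesis .
  qed
  then have h: "\<forall>c. (\<Sum>l<k. amult \<theta> n (M i l) (astar \<theta> n (M i l)) c) \<noteq> 0 \<longrightarrow>
               c = (\<lambda>_. 0) \<or> (\<exists>l<k. M i l c \<noteq> 0)" using i k_def by auto
  have "\<forall>l<k. \<forall>a. M i l a \<noteq> 0 \<longrightarrow> a = (\<lambda>_. 0)"
    by (rule key_scalar[OF A As h])
  then have "M i j = ascal (M i j (\<lambda>_. 0))" using j k_def scalar_of by auto
  then show "snd P i j = ascal (sc (snd P) i j)" unfolding M_def sc_def .
qed

lemma unitary_scal:
  assumes U: "unitary \<theta> n k U"
  shows "scal k U"
  unfolding scal_def
proof (intro allI impI)
  fix i j assume i: "i < k" and j: "j < k"
  have im: "is_mat n (k, U)" and pr: "\<forall>i<k. \<forall>j<k. mmult \<theta> n k U (madj \<theta> n U) i j = (if i = j then aone else 0)"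
    using U unfolding unitary_def by auto
  have A: "\<forall>l<k. Aelem n (U i l)" using im i unfolding is_mat_def by auto
  have As: "\<forall>l<k. Aelem n (astar \<theta> n (U i l))" using A Aelem_astar by blast
  have "(\<Sum>l<k. amult \<theta> n (U i l) (astar \<theta> n (U i l)) c) = aone c" for c
  proof -
    have "(\<Sum>l<k. amult \<theta> n (U i l) (astar \<theta> n (U i l)) c) = mmult \<theta> n k U (madj \<theta> n U) i i c"
      unfolding mmult_def sum_app madj_def ..
    also have "\<dots> = aone c" using pr i by simp
    finally show ?thesis .
  qed
  then have h: "\<forall>c. (\<Sum>l<k. amult \<theta> n (U i l) (astar \<theta> n (U i l)) c) \<noteq> 0 \<longrightarrow>
               c = (\<lambda>_. 0) \<or> (\<exists>l<k. U i l c \<noteq> 0)" by (auto simp: ascal_def split: if_splits)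
  have "\<forall>l<k. \<forall>a. U i l a \<noteq> 0 \<longrightarrow> a = (\<lambda>_. 0)"
    by (rule key_scalar[OF A As h])
  then have "U i j = ascal (U i j (\<lambda>_. 0))" using j scalar_of by auto
  then show "U i j = ascal (sc U i j)" unfolding sc_def .
qed

lemma proj_cproj:
  assumes P: "projector \<theta> n P"
  shows "cproj (fst P) (sc (snd P))"
proof -
  note S = proj_scal[OF P]
  have pr: "\<forall>i<fst P. \<forall>j<fst P. mmult \<theta> n (fst P) (snd P) (snd P) i j = snd P i j \<and> madj \<theta> n (snd P) i j = snd P i j"
    using P unfolding projector_def by auto
  show ?thesis unfolding cproj_def
  proof (intro allI impI conjI)
    fix i j assume i: "i < fst P" and j: "j < fst P"
    show "cmul (fst P) (sc (snd P)) (sc (snd P)) i j = sc (snd P) i j"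
      using sc_mmult[OF S S i j, of \<theta> n] pr i j by (simp add: sc_def)
    show "cnj (sc (snd P) j i) = sc (snd P) i j"
      using sc_madj[OF S i j, of \<theta> n] pr i j by (simp add: sc_def cadj_def)
  qed
qed

lemma projector_of:
  assumes S: "scal k M" and C: "cproj k (sc M)"
  shows "projector \<theta> n (k, M)"
  unfolding projector_def
proof (simp, intro conjI allI impI)
  show "is_mat n (k, M)" unfolding is_mat_def using S Aelem_ascal unfolding scal_def by simp
next
  fix i j assume i: "i < k" and j: "j < k"
  show "mmult \<theta> n k M M i j = M i j"
    using mmult_sc[OF S S i j, of \<theta> n] C S i j unfolding cproj_def scal_def by simp
  show "madj \<theta> n M i j = M i j"
    using madj_sc[OF S i j, of \<theta> n] C S i j unfolding cproj_def scal_def cadj_def by simp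
qed

lemma fst_dsum: "fst (dsum P Q) = fst P + fst Q" unfolding dsum_def by simp

lemma sc_dsum: "sc (snd (dsum P Q)) = bd (fst P) (sc (snd P)) (sc (snd Q))"
  unfolding sc_def dsum_def bd_def by (intro ext) simp

lemma scal_dsum:
  assumes "scal (fst P) (snd P)" "scal (fst Q) (snd Q)"
  shows "scal (fst (dsum P Q)) (snd (dsum P Q))"
  unfolding scal_def fst_dsum sc_dsum
proof (intro allI impI)
  fix i j assume i: "i < fst P + fst Q" and j: "j < fst P + fst Q"
  show "snd (dsum P Q) i j = ascal (bd (fst P) (sc (snd P)) (sc (snd Q)) i j)"
  proof (cases "i < fst P \<and> j < fst P")
    case True then show ?thesis using assms(1) unfolding dsum_def bd_def scal_def by simp
  next
    case False
    show ?thesis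
    proof (cases "fst P \<le> i \<and> fst P \<le> j")
      case True
      then have "i - fst P < fst Q" "j - fst P < fst Q" using i j by auto
      then show ?thesis using assms(2) True False unfolding dsum_def bd_def scal_def by simp
    next
      case F2: False
      then show ?thesis using False unfolding dsum_def bd_def by (auto simp: ascal_zero)
    qed
  qed
qed

lemma proj_dsum:
  assumes P: "projector \<theta> n P" and Q: "projector \<theta> n Q"
  shows "projector \<theta> n (dsum P Q)"
proof -
  have S: "scal (fst (dsum P Q)) (snd (dsum P Q))" by (rule scal_dsum[OF proj_scal[OF P] proj_scal[OF Q]])
  have C: "cproj (fst (dsum P Q)) (sc (snd (dsum P Q)))"
    unfolding fst_dsum sc_dsum by (rule cproj_bd[OF proj_cproj[OF P] proj_cproj[OF Q]])
  from projector_of[OF S C, of \<theta> n] show ?thesis by simp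
qed

lemma sc_zero: "sc (\<lambda>i j. 0) = (\<lambda>i j. 0)" unfolding sc_def by simp

lemma proj_zmat: "projector \<theta> n (zmat m)"
proof -
  have "scal m (\<lambda>i j. 0)" unfolding scal_def sc_zero by (simp add: ascal_zero)
  from projector_of[OF this, of \<theta> n] show ?thesis unfolding zmat_def sc_zero using cproj_zero by simp
qed

definition trc :: "mat \<Rightarrow> complex" where "trc P = ctr (fst P) (sc (snd P))"

lemma trc_dsum: "trc (dsum P Q) = trc P + trc Q"
  unfolding trc_def fst_dsum sc_dsum ctr_bd ..

lemma trc_zmat: "trc (zmat m) = 0" unfolding trc_def zmat_def ctr_def by (simp add: sc_def)

lemma trc_nat: "projector \<theta> n P \<Longrightarrow> \<exists>r. trc P = of_nat r"
  unfolding trc_def using cproj_trace_nat proj_cproj by blast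




lemma cmul_cong: "(\<forall>l<k. A i l = A' i l) \<Longrightarrow> (\<forall>l<k. B l j = B' l j) \<Longrightarrow> cmul k A B i j = cmul k A' B' i j"
  unfolding cmul_def by (intro sum.cong refl) auto

lemma sc_conj:
  assumes U: "scal N U" and D: "scal N D" and i: "i < N" and j: "j < N"
  shows "mmult \<theta> n N (mmult \<theta> n N U D) (madj \<theta> n U) i j = ascal (cmul N (cmul N (sc U) (sc D)) (cadj (sc U)) i j)"
proof -
  have "mmult \<theta> n N (mmult \<theta> n N U D) (madj \<theta> n U) i j
      = ascal (cmul N (sc (mmult \<theta> n N U D)) (sc (madj \<theta> n U)) i j)"
    by (rule mmult_sc[OF scal_mmult[OF U D] scal_madj[OF U] i j])
  also have "cmul N (sc (mmult \<theta> n N U D)) (sc (madj \<theta> n U)) i j = cmul N (cmul N (sc U) (sc D)) (cadj (sc U)) i j"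
    by (rule cmul_cong) (use sc_mmult[OF U D] sc_madj[OF U] i j in auto)
  finally show ?thesis .
qed

lemma sc_UUadj:
  assumes U: "scal N U" and i: "i < N" and j: "j < N"
  shows "mmult \<theta> n N U (madj \<theta> n U) i j = ascal (cmul N (sc U) (cadj (sc U)) i j)"
    "mmult \<theta> n N (madj \<theta> n U) U i j = ascal (cmul N (cadj (sc U)) (sc U) i j)"
proof -
  have "mmult \<theta> n N U (madj \<theta> n U) i j = ascal (cmul N (sc U) (sc (madj \<theta> n U)) i j)"
    by (rule mmult_sc[OF U scal_madj[OF U] i j])
  also have "cmul N (sc U) (sc (madj \<theta> n U)) i j = cmul N (sc U) (cadj (sc U)) i j"
    by (rule cmul_cong) (use sc_madj[OF U] j in auto)
  finally show "mmult \<theta> n N U (madj \<theta> n U) i j = ascal (cmul N (sc U) (cadj (sc U)) i j)" .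
  have "mmult \<theta> n N (madj \<theta> n U) U i j = ascal (cmul N (sc (madj \<theta> n U)) (sc U) i j)"
    by (rule mmult_sc[OF scal_madj[OF U] U i j])
  also have "cmul N (sc (madj \<theta> n U)) (sc U) i j = cmul N (cadj (sc U)) (sc U) i j"
    by (rule cmul_cong) (use sc_madj[OF U] i in auto)
  finally show "mmult \<theta> n N (madj \<theta> n U) U i j = ascal (cmul N (cadj (sc U)) (sc U) i j)" .
qed

lemma aone_cid: "(if i = j then aone else 0) = ascal (cid i j)"
  unfolding cid_def by (simp add: ascal_zero)

lemma equiv_trace:
  assumes X: "projector \<theta> n X" and Y: "projector \<theta> n Y" and E: "proj_equiv \<theta> n X Y"
  shows "trc X = trc Y"
proof -
  obtain m m' U where mm: "fst X + m = fst Y + m'" and U: "unitary \<theta> n (fst X + m) U"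
    and eq: "\<forall>i<fst X + m. \<forall>j<fst X + m. snd (dsum X (zmat m)) i j =
        mmult \<theta> n (fst X + m) (mmult \<theta> n (fst X + m) U (snd (dsum Y (zmat m')))) (madj \<theta> n U) i j"
    using E unfolding proj_equiv_def by blast
  define N where "N = fst X + m"
  define Dx where "Dx = dsum X (zmat m)"
  define Dy where "Dy = dsum Y (zmat m')"
  have fx: "fst Dx = N" unfolding Dx_def N_def fst_dsum zmat_def by simp
  have fy: "fst Dy = N" unfolding Dy_def N_def fst_dsum zmat_def using mm by simp
  have PDx: "projector \<theta> n Dx" unfolding Dx_def by (rule proj_dsum[OF X proj_zmat])
  have PDy: "projector \<theta> n Dy" unfolding Dy_def by (rule proj_dsum[OF Y proj_zmat])
  have SU: "scal N U" using unitary_scal U N_def by simp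
  have SDy: "scal N (snd Dy)" using proj_scal[OF PDy] fy by simp
  have SDx: "scal N (snd Dx)" using proj_scal[OF PDx] fx by simp
  have ceq: "sc (snd Dx) i j = cmul N (cmul N (sc U) (sc (snd Dy))) (cadj (sc U)) i j" if "i < N" "j < N" for i j
    using eq[folded N_def Dx_def Dy_def, rule_format, OF that] sc_conj[OF SU SDy that, of \<theta> n]
    by (simp add: sc_def ascal_0_apply)
  have UU: "\<forall>i<N. \<forall>j<N. cmul N (cadj (sc U)) (sc U) i j = (if i = j then 1 else 0)"
  proof (intro allI impI)
    fix i j assume "i < N" "j < N"
    then have "mmult \<theta> n N (madj \<theta> n U) U i j = (if i = j then aone else 0)"
      using U unfolding unitary_def N_def by blast
    then have "ascal (cmul N (cadj (sc U)) (sc U) i j) = ascal (cid i j)"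
      using sc_UUadj(2)[OF SU \<open>i < N\<close> \<open>j < N\<close>, of \<theta> n] unfolding aone_cid by simp
    then show "cmul N (cadj (sc U)) (sc U) i j = (if i = j then 1 else 0)"
      unfolding ascal_eq_iff cid_def .
  qed
  have "trc Dx = ctr N (sc (snd Dx))" unfolding trc_def fx ..
  also have "\<dots> = ctr N (cmul N (cmul N (sc U) (sc (snd Dy))) (cadj (sc U)))"
    unfolding ctr_def using ceq by simp
  also have "\<dots> = ctr N (sc (snd Dy))" by (rule trace_inv[OF UU])
  also have "\<dots> = trc Dy" unfolding trc_def fy ..
  finally have "trc Dx = trc Dy" .
  then show ?thesis unfolding Dx_def Dy_def trc_dsum trc_zmat by simp
qed

lemma trace_equiv:
  assumes X: "projector \<theta> n X" and Y: "projector \<theta> n Y" and T: "trc X = trc Y"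
  shows "proj_equiv \<theta> n X Y"
proof -
  define N where "N = fst X + fst Y"
  define Dx where "Dx = dsum X (zmat (fst Y))"
  define Dy where "Dy = dsum Y (zmat (fst X))"
  have fx: "fst Dx = N" unfolding Dx_def N_def fst_dsum zmat_def by simp
  have fy: "fst Dy = N" unfolding Dy_def N_def fst_dsum zmat_def by simp
  have PDx: "projector \<theta> n Dx" unfolding Dx_def by (rule proj_dsum[OF X proj_zmat])
  have PDy: "projector \<theta> n Dy" unfolding Dy_def by (rule proj_dsum[OF Y proj_zmat])
  have SDy: "scal N (snd Dy)" using proj_scal[OF PDy] fy by simp
  have SDx: "scal N (snd Dx)" using proj_scal[OF PDx] fx by simp
  have CX: "cproj N (sc (snd Dx))" using proj_cproj[OF PDx] fx by simp
  have CY: "cproj N (sc (snd Dy))" using proj_cproj[OF PDy] fy by simp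
  have "ctr N (sc (snd Dx)) = trc Dx" unfolding trc_def fx ..
  also have "\<dots> = trc Dy" unfolding Dx_def Dy_def trc_dsum trc_zmat using T by simp
  also have "\<dots> = ctr N (sc (snd Dy))" unfolding trc_def fy ..
  finally have "ctr N (sc (snd Dx)) = ctr N (sc (snd Dy))" .
  from unitary_equiv[OF CX CY this] obtain U0 where
    U0: "\<forall>i<N. \<forall>j<N. cmul N U0 (cadj U0) i j = cid i j \<and> cmul N (cadj U0) U0 i j = cid i j"
    and E0: "\<forall>i<N. \<forall>j<N. sc (snd Dx) i j = cmul N (cmul N U0 (sc (snd Dy))) (cadj U0) i j" by blast
  define U where "U = (\<lambda>i j. ascal (U0 i j))"
  have scU: "sc U = U0" unfolding U_def sc_ascal ..
  have SU: "scal N U" unfolding scal_def scU unfolding U_def by simp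
  have uni: "unitary \<theta> n N U"
    unfolding unitary_def
  proof (intro conjI allI impI)
    show "is_mat n (N, U)" unfolding is_mat_def U_def by (simp add: Aelem_ascal)
  next
    fix i j assume "i < N" "j < N"
    then show "mmult \<theta> n N U (madj \<theta> n U) i j = (if i = j then aone else 0)"
      using sc_UUadj(1)[OF SU \<open>i < N\<close> \<open>j < N\<close>, of \<theta> n] U0 unfolding scU aone_cid by simp
  next
    fix i j assume "i < N" "j < N"
    then show "mmult \<theta> n N (madj \<theta> n U) U i j = (if i = j then aone else 0)"
      using sc_UUadj(2)[OF SU \<open>i < N\<close> \<open>j < N\<close>, of \<theta> n] U0 unfolding scU aone_cid by simp
  qed
  have "\<forall>i<N. \<forall>j<N. snd Dx i j = mmult \<theta> n N (mmult \<theta> n N U (snd Dy)) (madj \<theta> n U) i j"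
  proof (intro allI impI)
    fix i j assume i: "i < N" and j: "j < N"
    have "snd Dx i j = ascal (sc (snd Dx) i j)" using SDx i j unfolding scal_def by simp
    also have "\<dots> = mmult \<theta> n N (mmult \<theta> n N U (snd Dy)) (madj \<theta> n U) i j"
      using sc_conj[OF SU SDy i j, of \<theta> n] E0 i j unfolding scU by simp
    finally show "snd Dx i j = mmult \<theta> n N (mmult \<theta> n N U (snd Dy)) (madj \<theta> n U) i j" .
  qed
  then show ?thesis unfolding proj_equiv_def
    using uni N_def Dx_def Dy_def by (intro exI[of _ "fst Y"] exI[of _ "fst X"] exI[of _ U]) auto
qed

lemma trc_int: "projector \<theta> n P \<Longrightarrow> trc P = of_int \<lfloor>Re (trc P)\<rfloor>"
  using trc_nat[of \<theta> n P] by auto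

definition Imat :: "nat \<Rightarrow> mat" where "Imat k = (k, \<lambda>i j. ascal (cid i j))"

lemma proj_Imat: "projector \<theta> n (Imat k)"
proof -
  have "scal k (\<lambda>i j. ascal (cid i j))" unfolding scal_def sc_ascal by simp
  from projector_of[OF this] show ?thesis unfolding Imat_def sc_ascal using cproj_cid by simp
qed

lemma trc_Imat: "trc (Imat k) = of_nat k"
  unfolding trc_def Imat_def by (simp add: sc_ascal ctr_cid)

theorem corollary2p5:
  fixes n :: nat and \<theta> :: "nat \<Rightarrow> real"
  assumes "\<forall>m<n. 0 < \<theta> m"
  shows "(\<forall>P. projector \<theta> n P \<longrightarrow> (\<forall>i<fst P. \<forall>j<fst P. \<exists>c. snd P i j = ascal c))
    \<and> (\<exists>\<phi> :: mat \<Rightarrow> mat \<Rightarrow> int.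
         (\<forall>P Q P' Q'. projector \<theta> n P \<and> projector \<theta> n Q \<and> projector \<theta> n P' \<and> projector \<theta> n Q' \<longrightarrow>
            (K0_eq \<theta> n P Q P' Q' \<longleftrightarrow> \<phi> P Q = \<phi> P' Q') \<and>
            \<phi> (dsum P P') (dsum Q Q') = \<phi> P Q + \<phi> P' Q') \<and>
         (\<forall>z. \<exists>P Q. projector \<theta> n P \<and> projector \<theta> n Q \<and> \<phi> P Q = z))"
proof (intro conjI)
  show "\<forall>P. projector \<theta> n P \<longrightarrow> (\<forall>i<fst P. \<forall>j<fst P. \<exists>c. snd P i j = ascal c)"
    using proj_scal unfolding scal_def by blast
  define rk where "rk = (\<lambda>P. \<lfloor>Re (trc P)\<rfloor>)"
  have rk: "projector \<theta> n P \<Longrightarrow> trc P = of_int (rk P)" for P unfolding rk_def by (rule trc_int)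
  show "\<exists>\<phi> :: mat \<Rightarrow> mat \<Rightarrow> int.
         (\<forall>P Q P' Q'. projector \<theta> n P \<and> projector \<theta> n Q \<and> projector \<theta> n P' \<and> projector \<theta> n Q' \<longrightarrow>
            (K0_eq \<theta> n P Q P' Q' \<longleftrightarrow> \<phi> P Q = \<phi> P' Q') \<and>
            \<phi> (dsum P P') (dsum Q Q') = \<phi> P Q + \<phi> P' Q') \<and>
         (\<forall>z. \<exists>P Q. projector \<theta> n P \<and> projector \<theta> n Q \<and> \<phi> P Q = z)"
  proof (intro exI[of _ "\<lambda>P Q. rk P - rk Q"] conjI allI impI)
    fix P Q P' Q'
    assume pr: "projector \<theta> n P \<and> projector \<theta> n Q \<and> projector \<theta> n P' \<and> projector \<theta> n Q'"
    then have pP: "projector \<theta> n P" and pQ: "projector \<theta> n Q" and pP': "projector \<theta> n P'"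
      and pQ': "projector \<theta> n Q'" by auto
    show "K0_eq \<theta> n P Q P' Q' \<longleftrightarrow> rk P - rk Q = rk P' - rk Q'"
    proof
      assume "K0_eq \<theta> n P Q P' Q'"
      then obtain R where R: "projector \<theta> n R"
        and E: "proj_equiv \<theta> n (dsum (dsum P Q') R) (dsum (dsum P' Q) R)"
        unfolding K0_eq_def by blast
      have "trc (dsum (dsum P Q') R) = trc (dsum (dsum P' Q) R)"
        by (rule equiv_trace[OF proj_dsum[OF proj_dsum[OF pP pQ'] R] proj_dsum[OF proj_dsum[OF pP' pQ] R] E])
      then have "trc P + trc Q' = trc P' + trc Q" unfolding trc_dsum by simp
      then have "(of_int (rk P + rk Q') :: complex) = of_int (rk P' + rk Q)"
        using rk[OF pP] rk[OF pQ] rk[OF pP'] rk[OF pQ'] by simp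
      then have "rk P + rk Q' = rk P' + rk Q" using of_int_eq_iff by blast
      then show "rk P - rk Q = rk P' - rk Q'" by simp
    next
      assume "rk P - rk Q = rk P' - rk Q'"
      then have "rk P + rk Q' = rk P' + rk Q" by simp
      then have "(of_int (rk P + rk Q') :: complex) = of_int (rk P' + rk Q)" by simp
      then have "trc (dsum (dsum P Q') (zmat 0)) = trc (dsum (dsum P' Q) (zmat 0))"
        unfolding trc_dsum trc_zmat using rk[OF pP] rk[OF pQ] rk[OF pP'] rk[OF pQ'] by simp
      from trace_equiv[OF proj_dsum[OF proj_dsum[OF pP pQ'] proj_zmat] proj_dsum[OF proj_dsum[OF pP' pQ] proj_zmat] this]
      show "K0_eq \<theta> n P Q P' Q'" unfolding K0_eq_def using proj_zmat by blast
    qed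
    have e1: "trc (dsum P P') = of_int (rk P + rk P')" unfolding trc_dsum using rk[OF pP] rk[OF pP'] by simp
    have e2: "trc (dsum Q Q') = of_int (rk Q + rk Q')" unfolding trc_dsum using rk[OF pQ] rk[OF pQ'] by simp
    have "rk (dsum P P') = \<lfloor>Re (trc (dsum P P'))\<rfloor>" unfolding rk_def ..
    also have "\<dots> = rk P + rk P'" unfolding e1 by simp
    finally have "rk (dsum P P') = rk P + rk P'" .
    moreover have "rk (dsum Q Q') = \<lfloor>Re (trc (dsum Q Q'))\<rfloor>" unfolding rk_def ..
    moreover have "\<dots> = rk Q + rk Q'" unfolding e2 by simp
    ultimately show "rk (dsum P P') - rk (dsum Q Q') = rk P - rk Q + (rk P' - rk Q')" by simp
  next
    fix z :: int
    have rI: "rk (Imat k) = int k" for k unfolding rk_def trc_Imat by simp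
    have rZ: "rk (zmat 0) = 0" unfolding rk_def trc_zmat by simp
    show "\<exists>P Q. projector \<theta> n P \<and> projector \<theta> n Q \<and> rk P - rk Q = z"
    proof (cases "0 \<le> z")
      case True
      then show ?thesis using proj_Imat[of \<theta> n "nat z"] proj_zmat[of \<theta> n 0] rI rZ
        by (intro exI[of _ "Imat (nat z)"] exI[of _ "zmat 0"]) simp
    next
      case False
      then show ?thesis using proj_Imat[of \<theta> n "nat (-z)"] proj_zmat[of \<theta> n 0] rI rZ
        by (intro exI[of _ "zmat 0"] exI[of _ "Imat (nat (-z))"]) simp
    qed
  qed
qed


end
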